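(* Let $n\ge 1$, let $B_1,\dots,B_n$ be independent real-valued service times with finite means $\mu_i$ and variances $\sigma_i^2$, and let $\omega\in(0,1)$. Assume (dilation ordering) $B_1\le_{\mathrm{dil}}B_2\le_{\mathrm{dil}}\cdots\le_{\mathrm{dil}}B_n$, and (symmetry) each $B_i$ has a distribution symmetric around its mean $\mu_i$. Then $$\varrho_\omega=\frac{C(\mathrm{Id},\boldsymbol\mu,\omega)}{\min_{\tau\in\mathsf S_n}C(\tau,\boldsymbol\mu,\omega)}\le 2.$$
   Context: Appointment model: a sequence is a permutation $\tau\in\mathsf S_n$ of $\{1,\dots,n\}$, $\tau(i)$ being the patient in appointment slot $i$. A schedule is a vector $\boldsymbol x=(x_1,\dots,x_n)$, where $x_j$ is the interarrival time between patient $j$ and the next patient. Waiting times $W_i$ and idle times $I_i$ of slot $i$ are given by $W_1=I_1=0$ and $W_{i+1}=(W_i+B_{\tau(i)}-x_{\tau(i)})^+$, $I_{i+1}=(W_i+B_{\tau(i)}-x_{\tau(i)})^-$, where $a^+=\max\{0,a\}$, $a^-=\max\{0,-a\}$. The cost is $C(\tau,\boldsymbol x,\omega)=\omega\sum_{i=1}^n\mathbb E I_i+(1-\omega)\sum_{i=1}^n\mathbb E W_i$. The mean-based schedule is $\boldsymbol\mu=(\mu_1,\dots,\mu_n)$, and $\mathrm{Id}$ is the identity permutation (the smallest-variance-first sequence). For random variables $A,B$, $A\le_{\mathrm{cx}}B$ means $\mathbb E\phi(A)\le\mathbb E\phi(B)$ for all convex $\phi:\mathbb R\to\mathbb R$ for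 which the expectations exist, and $A\le_{\mathrm{dil}}B$ means $A-\mathbb EA\le_{\mathrm{cx}}B-\mathbb EB$. *)

theory Defs
  imports "HOL-Probability.Probability"
begin

definition cx_le :: "'a measure \<Rightarrow> ('a \<Rightarrow> real) \<Rightarrow> ('a \<Rightarrow> real) \<Rightarrow> bool" where
  "cx_le M A B \<longleftrightarrow>
     (\<forall>\<phi> :: real \<Rightarrow> real. convex_on UNIV \<phi> \<longrightarrow>
        integrable M (\<lambda>x. \<phi> (A x)) \<longrightarrow> integrable M (\<lambda>x. \<phi> (B x)) \<longrightarrow>
        (\<integral>x. \<phi> (A x) \<partial>M) \<le> (\<integral>x. \<phi> (B x) \<partial>M))"

definition dil_le :: "'a measure \<Rightarrow> ('a \<Rightarrow> real) \<Rightarrow> ('a \<Rightarrow> real) \<Rightarrow> bool" where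
  "dil_le M A B \<longleftrightarrow>
     cx_le M (\<lambda>x. A x - (\<integral>y. A y \<partial>M)) (\<lambda>x. B x - (\<integral>y. B y \<partial>M))"

fun wait :: "(nat \<Rightarrow> nat) \<Rightarrow> (nat \<Rightarrow> real) \<Rightarrow> (nat \<Rightarrow> 'a \<Rightarrow> real) \<Rightarrow> nat \<Rightarrow> 'a \<Rightarrow> real" where
  "wait \<tau> x B 0 s = 0"
| "wait \<tau> x B (Suc i) s =
     (if i = 0 then 0 else max 0 (wait \<tau> x B i s + B (\<tau> i) s - x (\<tau> i)))"

definition idle :: "(nat \<Rightarrow> nat) \<Rightarrow> (nat \<Rightarrow> real) \<Rightarrow> (nat \<Rightarrow> 'a \<Rightarrow> real) \<Rightarrow> nat \<Rightarrow> 'a \<Rightarrow> real" where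
  "idle \<tau> x B i s =
     (if i \<le> 1 then 0
      else max 0 (- (wait \<tau> x B (i - 1) s + B (\<tau> (i - 1)) s - x (\<tau> (i - 1)))))"

definition cost :: "'a measure \<Rightarrow> (nat \<Rightarrow> 'a \<Rightarrow> real) \<Rightarrow> nat \<Rightarrow> (nat \<Rightarrow> nat) \<Rightarrow> (nat \<Rightarrow> real) \<Rightarrow> real \<Rightarrow> real" where
  "cost M B n \<tau> x w =
     w * (\<Sum>i=1..n. \<integral>s. idle \<tau> x B i s \<partial>M)
     + (1 - w) * (\<Sum>i=1..n. \<integral>s. wait \<tau> x B i s \<partial>M)"

definition mean_sched :: "'a measure \<Rightarrow> (nat \<Rightarrow> 'a \<Rightarrow> real) \<Rightarrow> nat \<Rightarrow> real" where
  "mean_sched M B j = (\<integral>s. B j s \<partial>M)"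

end

theory Submission
  imports Defs
begin

lemma (in prob_space) indep_var_nn_integral:
  fixes Y Z :: "'a \<Rightarrow> real" and g :: "real \<Rightarrow> real \<Rightarrow> ennreal"
  assumes ind: "indep_var borel Y borel Z"
    and g[measurable]: "(\<lambda>p. g (fst p) (snd p)) \<in> borel_measurable (borel \<Otimes>\<^sub>M borel)"
  shows "(\<integral>\<^sup>+\<omega>. g (Y \<omega>) (Z \<omega>) \<partial>M) = (\<integral>\<^sup>+\<omega>. (\<integral>\<^sup>+\<omega>'. g (Y \<omega>') (Z \<omega>) \<partial>M) \<partial>M)"
proof -
  have rv[measurable]: "Y \<in> borel_measurable M" "Z \<in> borel_measurable M"
    using ind indep_var_distribution_eq by auto
  have eq: "distr M borel Y \<Otimes>\<^sub>M distr M borel Z = distr M (borel \<Otimes>\<^sub>M borel) (\<lambda>x. (Y x, Z x))"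
    using ind indep_var_distribution_eq by auto
  have gy[measurable]: "(\<lambda>y. g y c) \<in> borel_measurable borel" for c
    using measurable_compose[where f="\<lambda>y. (y,c)", OF _ g] by simp
  interpret PY: prob_space "distr M borel Y" by (rule prob_space_distr) (rule rv)
  interpret PZ: prob_space "distr M borel Z" by (rule prob_space_distr) (rule rv)
  interpret P: pair_prob_space "distr M borel Y" "distr M borel Z" ..
  have gm: "(\<lambda>p. g (fst p) (snd p)) \<in> borel_measurable (distr M borel Y \<Otimes>\<^sub>M distr M borel Z)"
    by (simp add: eq)
  have "(\<integral>\<^sup>+\<omega>. g (Y \<omega>) (Z \<omega>) \<partial>M) = (\<integral>\<^sup>+p. g (fst p) (snd p) \<partial>(distr M (borel \<Otimes>\<^sub>M borel) (\<lambda>x. (Y x, Z x))))"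
    by (subst nn_integral_distr) auto
  also have "\<dots> = (\<integral>\<^sup>+p. g (fst p) (snd p) \<partial>(distr M borel Y \<Otimes>\<^sub>M distr M borel Z))"
    by (simp add: eq)
  also have "\<dots> = (\<integral>\<^sup>+z. (\<integral>\<^sup>+y. g y z \<partial>distr M borel Y) \<partial>distr M borel Z)"
    using P.nn_integral_snd[OF gm] by simp
  also have "\<dots> = (\<integral>\<^sup>+\<omega>. (\<integral>\<^sup>+y. g y (Z \<omega>) \<partial>distr M borel Y) \<partial>M)"
    apply (subst nn_integral_distr)
      apply simp
     apply (rule PY.borel_measurable_nn_integral)
     apply (subst measurable_cong_sets[OF sets_pair_measure_cong[OF refl sets_distr] refl])
     using measurable_pair_swap[OF g] apply (simp add: split_beta')
    by simp
  also have "\<dots> = (\<integral>\<^sup>+\<omega>. (\<integral>\<^sup>+\<omega>'. g (Y \<omega>') (Z \<omega>) \<partial>M) \<partial>M)"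
    by (intro nn_integral_cong, subst nn_integral_distr) auto
  finally show ?thesis .
qed


lemma (in prob_space) indep_var_nn_integral2:
  fixes Y Z :: "'a \<Rightarrow> real" and g :: "real \<Rightarrow> real \<Rightarrow> ennreal"
  assumes ind: "indep_var borel Y borel Z"
    and g[measurable]: "(\<lambda>p. g (fst p) (snd p)) \<in> borel_measurable (borel \<Otimes>\<^sub>M borel)"
  shows "(\<integral>\<^sup>+\<omega>. g (Y \<omega>) (Z \<omega>) \<partial>M) = (\<integral>\<^sup>+\<omega>. (\<integral>\<^sup>+\<omega>'. g (Y \<omega>) (Z \<omega>') \<partial>M) \<partial>M)"
proof -
  have rv[measurable]: "Y \<in> borel_measurable M" "Z \<in> borel_measurable M"
    using ind indep_var_distribution_eq by auto
  have eq: "distr M borel Y \<Otimes>\<^sub>M distr M borel Z = distr M (borel \<Otimes>\<^sub>M borel) (\<lambda>x. (Y x, Z x))"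
    using ind indep_var_distribution_eq by auto
  have gy[measurable]: "(\<lambda>y. g c y) \<in> borel_measurable borel" for c
    using measurable_compose[where f="\<lambda>y. (c,y)", OF _ g] by simp
  interpret PY: prob_space "distr M borel Y" by (rule prob_space_distr) (rule rv)
  interpret PZ: prob_space "distr M borel Z" by (rule prob_space_distr) (rule rv)
  interpret P: pair_prob_space "distr M borel Y" "distr M borel Z" ..
  have gm: "(\<lambda>p. g (fst p) (snd p)) \<in> borel_measurable (distr M borel Y \<Otimes>\<^sub>M distr M borel Z)"
    by (simp add: eq)
  have "(\<integral>\<^sup>+\<omega>. g (Y \<omega>) (Z \<omega>) \<partial>M) = (\<integral>\<^sup>+p. g (fst p) (snd p) \<partial>(distr M (borel \<Otimes>\<^sub>M borel) (\<lambda>x. (Y x, Z x))))"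
    by (subst nn_integral_distr) auto
  also have "\<dots> = (\<integral>\<^sup>+p. g (fst p) (snd p) \<partial>(distr M borel Y \<Otimes>\<^sub>M distr M borel Z))"
    by (simp add: eq)
  also have "\<dots> = (\<integral>\<^sup>+y. (\<integral>\<^sup>+z. g y z \<partial>distr M borel Z) \<partial>distr M borel Y)"
    using PZ.nn_integral_fst[OF gm] by simp
  also have "\<dots> = (\<integral>\<^sup>+\<omega>. (\<integral>\<^sup>+z. g (Y \<omega>) z \<partial>distr M borel Z) \<partial>M)"
    apply (subst nn_integral_distr)
      apply simp
     apply (rule PZ.borel_measurable_nn_integral)
     apply (subst measurable_cong_sets[OF sets_pair_measure_cong[OF refl sets_distr] refl])
     using g apply (simp add: split_beta')
    by simp
  also have "\<dots> = (\<integral>\<^sup>+\<omega>. (\<integral>\<^sup>+\<omega>'. g (Y \<omega>) (Z \<omega>') \<partial>M) \<partial>M)"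
    by (intro nn_integral_cong, subst nn_integral_distr) auto
  finally show ?thesis .
qed

lemma (in prob_space) symm_shift:
  fixes X :: "'a \<Rightarrow> real"
  assumes X[measurable]: "X \<in> borel_measurable M"
    and symX: "distr M borel X = distr M borel (\<lambda>\<omega>. - X \<omega>)"
  shows "(\<integral>\<^sup>+\<omega>. ennreal (max 0 (\<bar>c\<bar> + X \<omega> - v)) \<partial>M) \<le> (\<integral>\<^sup>+\<omega>. ennreal (max 0 (\<bar>c + X \<omega>\<bar> - v)) \<partial>M)"
proof (cases "c \<ge> 0")
  case True
  then show ?thesis by (intro nn_integral_mono) (auto intro!: ennreal_leI)
next
  case False
  have "(\<integral>\<^sup>+\<omega>. ennreal (max 0 (\<bar>c\<bar> + X \<omega> - v)) \<partial>M)
      = (\<integral>\<^sup>+x. ennreal (max 0 (\<bar>c\<bar> + x - v)) \<partial>distr M borel X)"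
    by (subst nn_integral_distr) auto
  also have "\<dots> = (\<integral>\<^sup>+x. ennreal (max 0 (\<bar>c\<bar> + x - v)) \<partial>distr M borel (\<lambda>\<omega>. - X \<omega>))"
    by (simp add: symX)
  also have "\<dots> = (\<integral>\<^sup>+\<omega>. ennreal (max 0 (\<bar>c\<bar> - X \<omega> - v)) \<partial>M)"
    by (subst nn_integral_distr) auto
  also have "\<dots> \<le> (\<integral>\<^sup>+\<omega>. ennreal (max 0 (\<bar>c + X \<omega>\<bar> - v)) \<partial>M)"
    using False by (intro nn_integral_mono) (auto intro!: ennreal_leI)
  finally show ?thesis .
qed

lemma (in prob_space) lindley_step:
  fixes Y S X :: "'a \<Rightarrow> real"
  assumes indY: "indep_var borel Y borel X" and indS: "indep_var borel S borel X"
    and symX: "distr M borel X = distr M borel (\<lambda>\<omega>. - X \<omega>)"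
    and IH: "\<And>u. (\<integral>\<^sup>+\<omega>. ennreal (max 0 (Y \<omega> - u)) \<partial>M) \<le> (\<integral>\<^sup>+\<omega>. ennreal (max 0 (\<bar>S \<omega>\<bar> - u)) \<partial>M)"
    and v: "0 \<le> v"
  shows "(\<integral>\<^sup>+\<omega>. ennreal (max 0 (max 0 (Y \<omega> + X \<omega>) - v)) \<partial>M)
       \<le> (\<integral>\<^sup>+\<omega>. ennreal (max 0 (\<bar>S \<omega> + X \<omega>\<bar> - v)) \<partial>M)"
proof -
  have [measurable]: "X \<in> borel_measurable M" "Y \<in> borel_measurable M" "S \<in> borel_measurable M"
    using indY indS indep_var_distribution_eq by auto
  have "(\<integral>\<^sup>+\<omega>. ennreal (max 0 (max 0 (Y \<omega> + X \<omega>) - v)) \<partial>M)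
      = (\<integral>\<^sup>+\<omega>. ennreal (max 0 (Y \<omega> + X \<omega> - v)) \<partial>M)"
    using v by (intro nn_integral_cong) (auto simp: max_def)
  also have "\<dots> = (\<integral>\<^sup>+\<omega>. (\<integral>\<^sup>+\<omega>'. ennreal (max 0 (Y \<omega>' + X \<omega> - v)) \<partial>M) \<partial>M)"
    by (rule indep_var_nn_integral[OF indY, where g="\<lambda>y x. ennreal (max 0 (y + x - v))"]; measurable)
  also have "\<dots> \<le> (\<integral>\<^sup>+\<omega>. (\<integral>\<^sup>+\<omega>'. ennreal (max 0 (\<bar>S \<omega>'\<bar> + X \<omega> - v)) \<partial>M) \<partial>M)"
  proof (rule nn_integral_mono)
    fix \<omega>
    have "(\<integral>\<^sup>+\<omega>'. ennreal (max 0 (Y \<omega>' + X \<omega> - v)) \<partial>M) = (\<integral>\<^sup>+\<omega>'. ennreal (max 0 (Y \<omega>' - (v - X \<omega>))) \<partial>M)"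
      by (intro nn_integral_cong) (simp add: algebra_simps)
    also have "\<dots> \<le> (\<integral>\<^sup>+\<omega>'. ennreal (max 0 (\<bar>S \<omega>'\<bar> - (v - X \<omega>))) \<partial>M)"
      by (rule IH)
    also have "\<dots> = (\<integral>\<^sup>+\<omega>'. ennreal (max 0 (\<bar>S \<omega>'\<bar> + X \<omega> - v)) \<partial>M)"
      by (intro nn_integral_cong) (simp add: algebra_simps)
    finally show "(\<integral>\<^sup>+\<omega>'. ennreal (max 0 (Y \<omega>' + X \<omega> - v)) \<partial>M) \<le> (\<integral>\<^sup>+\<omega>'. ennreal (max 0 (\<bar>S \<omega>'\<bar> + X \<omega> - v)) \<partial>M)" .
  qed
  also have "\<dots> = (\<integral>\<^sup>+\<omega>. ennreal (max 0 (\<bar>S \<omega>\<bar> + X \<omega> - v)) \<partial>M)"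
    by (rule indep_var_nn_integral[OF indS, where g="\<lambda>s x. ennreal (max 0 (\<bar>s\<bar> + x - v))", symmetric]; measurable)
  also have "\<dots> = (\<integral>\<^sup>+\<omega>. (\<integral>\<^sup>+\<omega>'. ennreal (max 0 (\<bar>S \<omega>\<bar> + X \<omega>' - v)) \<partial>M) \<partial>M)"
    by (rule indep_var_nn_integral2[OF indS, where g="\<lambda>s x. ennreal (max 0 (\<bar>s\<bar> + x - v))"]; measurable)
  also have "\<dots> \<le> (\<integral>\<^sup>+\<omega>. (\<integral>\<^sup>+\<omega>'. ennreal (max 0 (\<bar>S \<omega> + X \<omega>'\<bar> - v)) \<partial>M) \<partial>M)"
    by (intro nn_integral_mono symm_shift symX) measurable
  also have "\<dots> = (\<integral>\<^sup>+\<omega>. ennreal (max 0 (\<bar>S \<omega> + X \<omega>\<bar> - v)) \<partial>M)"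
    by (rule indep_var_nn_integral2[OF indS, where g="\<lambda>s x. ennreal (max 0 (\<bar>s + x\<bar> - v))", symmetric]; measurable)
  finally show ?thesis .
qed

lemma (in prob_space) extend_neg:
  fixes Y S :: "'a \<Rightarrow> real"
  assumes [measurable]: "Y \<in> borel_measurable M" "S \<in> borel_measurable M"
    and Ynn: "\<And>\<omega>. 0 \<le> Y \<omega>"
    and H: "\<And>v. 0 \<le> v \<Longrightarrow> (\<integral>\<^sup>+\<omega>. ennreal (max 0 (Y \<omega> - v)) \<partial>M) \<le> (\<integral>\<^sup>+\<omega>. ennreal (max 0 (\<bar>S \<omega>\<bar> - v)) \<partial>M)"
  shows "(\<integral>\<^sup>+\<omega>. ennreal (max 0 (Y \<omega> - u)) \<partial>M) \<le> (\<integral>\<^sup>+\<omega>. ennreal (max 0 (\<bar>S \<omega>\<bar> - u)) \<partial>M)"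
proof (cases "0 \<le> u")
  case True
  then show ?thesis by (rule H)
next
  case False
  have 1: "(\<integral>\<^sup>+\<omega>. ennreal (max 0 (Y \<omega> - u)) \<partial>M) = (\<integral>\<^sup>+\<omega>. ennreal (max 0 (Y \<omega> - 0)) + ennreal (- u) \<partial>M)"
    apply (intro nn_integral_cong)
    subgoal for \<omega> using Ynn[of \<omega>] False by (simp add: max_def ennreal_plus[symmetric] del: ennreal_plus)
    done
  have 2: "(\<integral>\<^sup>+\<omega>. ennreal (max 0 (\<bar>S \<omega>\<bar> - u)) \<partial>M) = (\<integral>\<^sup>+\<omega>. ennreal (max 0 (\<bar>S \<omega>\<bar> - 0)) + ennreal (- u) \<partial>M)"
    using False by (intro nn_integral_cong) (auto simp: max_def ennreal_plus[symmetric] simp del: ennreal_plus)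
  have h0: "(\<integral>\<^sup>+\<omega>. ennreal (max 0 (Y \<omega> - 0)) \<partial>M) \<le> (\<integral>\<^sup>+\<omega>. ennreal (max 0 (\<bar>S \<omega>\<bar> - 0)) \<partial>M)"
    by (rule H) simp
  have e1: "(\<integral>\<^sup>+\<omega>. ennreal (max 0 (Y \<omega> - 0)) + ennreal (- u) \<partial>M) = (\<integral>\<^sup>+\<omega>. ennreal (max 0 (Y \<omega> - 0)) \<partial>M) + ennreal (-u)"
    by (subst nn_integral_add) (auto simp: emeasure_space_1)
  have e2: "(\<integral>\<^sup>+\<omega>. ennreal (max 0 (\<bar>S \<omega>\<bar> - 0)) + ennreal (- u) \<partial>M) = (\<integral>\<^sup>+\<omega>. ennreal (max 0 (\<bar>S \<omega>\<bar> - 0)) \<partial>M) + ennreal (-u)"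
    by (subst nn_integral_add) (auto simp: emeasure_space_1)
  show ?thesis
    by (simp only: 1 2 e1 e2) (rule add_right_mono[OF h0])
qed

lemma wait_local:
  assumes "\<And>i. 1 \<le> i \<Longrightarrow> i < j \<Longrightarrow> B' (\<tau> i) s' = B (\<tau> i) s"
  shows "wait \<tau> x B' j s' = wait \<tau> x B j s"
  using assms
proof (induction j)
  case 0
  then show ?case by simp
next
  case (Suc j)
  then show ?case by auto
qed

lemma wait_meas:
  assumes "\<And>i. 1 \<le> i \<Longrightarrow> i < j \<Longrightarrow> B (\<tau> i) \<in> borel_measurable N"
  shows "(\<lambda>s. wait \<tau> x B j s) \<in> borel_measurable N"
  using assms
proof (induction j)
  case 0
  then show ?case by simp
next
  case (Suc j)
  have "(\<lambda>s. wait \<tau> x B j s) \<in> borel_measurable N" using Suc by auto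
  moreover have "j \<noteq> 0 \<Longrightarrow> B (\<tau> j) \<in> borel_measurable N" using Suc by auto
  ultimately show ?case by (cases "j = 0") auto
qed

lemma wait_nonneg: "0 \<le> wait \<tau> x B j s"
  by (induction j) auto

lemma (in prob_space) indep_block:
  fixes B :: "'i \<Rightarrow> 'a \<Rightarrow> real"
  assumes ind: "indep_vars (\<lambda>_. borel) B I" and J: "J \<subseteq> I" and k: "k \<in> I" "k \<notin> J"
    and f: "f \<in> borel_measurable (PiM J (\<lambda>_. borel))" and h: "h \<in> borel_measurable borel"
  shows "indep_var borel (\<lambda>\<omega>. f (restrict (\<lambda>i. B i \<omega>) J)) borel (\<lambda>\<omega>. h (B k \<omega>))"
proof -
  have hm: "(\<lambda>g. h (g k)) \<in> borel_measurable (PiM {k} (\<lambda>_. borel))"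
    using measurable_compose[OF measurable_component_singleton[of k "{k}" "\<lambda>_. borel"] h] by simp
  have "indep_var borel (f \<circ> (\<lambda>\<omega>. restrict (\<lambda>i. B i \<omega>) J)) borel ((\<lambda>g. h (g k)) \<circ> (\<lambda>\<omega>. restrict (\<lambda>i. B i \<omega>) {k}))"
    by (rule indep_var_compose[OF indep_var_restrict[OF ind] f hm]) (use J k in auto)
  then show ?thesis by (simp add: comp_def)
qed

lemma (in prob_space) lindley_id:
  fixes B :: "nat \<Rightarrow> 'a \<Rightarrow> real" and \<mu> :: "nat \<Rightarrow> real"
  assumes ind: "indep_vars (\<lambda>_. borel) B {1..n}"
    and symm: "\<And>i. i \<in> {1..n} \<Longrightarrow> distr M borel (\<lambda>s. B i s - \<mu> i) = distr M borel (\<lambda>s. \<mu> i - B i s)"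
  shows "j < n \<Longrightarrow> (\<integral>\<^sup>+\<omega>. ennreal (max 0 (wait id \<mu> B (Suc j) \<omega> - u)) \<partial>M)
      \<le> (\<integral>\<^sup>+\<omega>. ennreal (max 0 (\<bar>\<Sum>i=1..j. (B i \<omega> - \<mu> i)\<bar> - u)) \<partial>M)"
proof (induction j arbitrary: u)
  case 0
  then show ?case by simp
next
  case (Suc j)
  have Bm: "\<And>i. i \<in> {1..n} \<Longrightarrow> B i \<in> borel_measurable M"
    using ind by (auto simp: indep_vars_def)
  have k: "Suc j \<in> {1..n}" "Suc j \<notin> {1..j}" "{1..j} \<subseteq> {1..n}" using Suc.prems by auto
  have fm: "(\<lambda>g. wait id \<mu> (\<lambda>i g. g i) (Suc j) g) \<in> borel_measurable (PiM {1..j} (\<lambda>_. borel))"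
    by (rule wait_meas) auto
  have floc: "wait id \<mu> (\<lambda>i g. g i) (Suc j) (restrict (\<lambda>i. B i \<omega>) {1..j}) = wait id \<mu> B (Suc j) \<omega>" for \<omega>
    by (rule wait_local) auto
  have hm: "(\<lambda>x. x - \<mu> (Suc j)) \<in> borel_measurable borel" by measurable
  have indY: "indep_var borel (\<lambda>\<omega>. wait id \<mu> B (Suc j) \<omega>) borel (\<lambda>\<omega>. B (Suc j) \<omega> - \<mu> (Suc j))"
    using indep_block[OF ind k(3) k(1) k(2) fm hm] by (simp only: floc)
  have sm: "(\<lambda>g. \<Sum>i=1..j. (g i - \<mu> i)) \<in> borel_measurable (PiM {1..j} (\<lambda>_. borel))"
    by measurable
  have indS: "indep_var borel (\<lambda>\<omega>. \<Sum>i=1..j. (B i \<omega> - \<mu> i)) borel (\<lambda>\<omega>. B (Suc j) \<omega> - \<mu> (Suc j))"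
    using indep_block[OF ind k(3) k(1) k(2) sm hm] by simp
  have symX: "distr M borel (\<lambda>\<omega>. B (Suc j) \<omega> - \<mu> (Suc j)) = distr M borel (\<lambda>\<omega>. - (B (Suc j) \<omega> - \<mu> (Suc j)))"
    using symm[OF k(1)] by simp
  have IH: "(\<integral>\<^sup>+\<omega>. ennreal (max 0 (wait id \<mu> B (Suc j) \<omega> - u)) \<partial>M)
      \<le> (\<integral>\<^sup>+\<omega>. ennreal (max 0 (\<bar>\<Sum>i=1..j. (B i \<omega> - \<mu> i)\<bar> - u)) \<partial>M)" for u
    by (rule Suc.IH) (use Suc.prems in simp)
  have st: "(\<integral>\<^sup>+\<omega>. ennreal (max 0 (max 0 (wait id \<mu> B (Suc j) \<omega> + (B (Suc j) \<omega> - \<mu> (Suc j))) - v)) \<partial>M)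
       \<le> (\<integral>\<^sup>+\<omega>. ennreal (max 0 (\<bar>(\<Sum>i=1..j. (B i \<omega> - \<mu> i)) + (B (Suc j) \<omega> - \<mu> (Suc j))\<bar> - v)) \<partial>M)"
    if "0 \<le> v" for v
    by (rule lindley_step[OF indY indS symX IH that])
  have w2: "wait id \<mu> B (Suc (Suc j)) \<omega> = max 0 (wait id \<mu> B (Suc j) \<omega> + (B (Suc j) \<omega> - \<mu> (Suc j)))" for \<omega>
    by simp
  have s2: "(\<Sum>i=1..Suc j. (B i \<omega> - \<mu> i)) = (\<Sum>i=1..j. (B i \<omega> - \<mu> i)) + (B (Suc j) \<omega> - \<mu> (Suc j))" for \<omega>
    by simp
  have m1: "(\<lambda>\<omega>. wait id \<mu> B (Suc (Suc j)) \<omega>) \<in> borel_measurable M"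
    by (rule wait_meas) (use Bm Suc.prems in auto)
  have m2: "(\<lambda>\<omega>. \<Sum>i=1..Suc j. (B i \<omega> - \<mu> i)) \<in> borel_measurable M"
    using Bm Suc.prems by (intro borel_measurable_sum borel_measurable_diff) auto
  show ?case
    by (rule extend_neg[OF m1 m2 wait_nonneg]) (simp only: w2 s2 st)
qed

lemma convex_pos_shift: "convex_on UNIV (\<lambda>x::real. max 0 (t + x))"
proof (rule convex_onI)
  fix s x y :: real
  assume s: "0 < s" "s < 1"
  have a: "(1 - s) * (t + x) \<le> (1 - s) * max 0 (t + x)" using s by (intro mult_left_mono) auto
  have b: "s * (t + y) \<le> s * max 0 (t + y)" using s by (intro mult_left_mono) auto
  have c: "0 \<le> (1 - s) * max 0 (t + x)" "0 \<le> s * max 0 (t + y)" using s by auto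
  have "t + ((1 - s) *\<^sub>R x + s *\<^sub>R y) = (1 - s) * (t + x) + s * (t + y)" by (simp add: algebra_simps)
  then show "max 0 (t + ((1 - s) *\<^sub>R x + s *\<^sub>R y)) \<le> (1 - s) * max 0 (t + x) + s * max 0 (t + y)"
    using a b c by linarith
qed simp

lemma (in prob_space) dil_step:
  fixes A C :: "'a \<Rightarrow> real"
  assumes d: "dil_le M A C" and iA: "integrable M A" and iC: "integrable M C"
  shows "(\<integral>\<^sup>+\<omega>. ennreal (max 0 (t + (A \<omega> - (\<integral>x. A x \<partial>M)))) \<partial>M)
       \<le> (\<integral>\<^sup>+\<omega>. ennreal (max 0 (t + (C \<omega> - (\<integral>x. C x \<partial>M)))) \<partial>M)"
proof -
  have i1: "integrable M (\<lambda>\<omega>. max 0 (t + (A \<omega> - (\<integral>x. A x \<partial>M))))" using iA by auto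
  have i2: "integrable M (\<lambda>\<omega>. max 0 (t + (C \<omega> - (\<integral>x. C x \<partial>M))))" using iC by auto
  have le: "(\<integral>\<omega>. max 0 (t + (A \<omega> - (\<integral>x. A x \<partial>M))) \<partial>M) \<le> (\<integral>\<omega>. max 0 (t + (C \<omega> - (\<integral>x. C x \<partial>M))) \<partial>M)"
    using d i1 i2 convex_pos_shift[of t] unfolding dil_le_def cx_le_def by blast
  show ?thesis
    by (subst (1 2) nn_integral_eq_integral) (use i1 i2 le in auto)
qed

lemma (in prob_space) exchange:
  fixes B :: "nat \<Rightarrow> 'a \<Rightarrow> real" and \<mu> :: "nat \<Rightarrow> real"
  assumes ind: "indep_vars (\<lambda>_. borel) B {1..n}"
    and mono: "\<And>t. (\<integral>\<^sup>+\<omega>. ennreal (max 0 (t + (B a \<omega> - \<mu> a))) \<partial>M) \<le> (\<integral>\<^sup>+\<omega>. ennreal (max 0 (t + (B b \<omega> - \<mu> b))) \<partial>M)"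
    and C: "C \<subseteq> {1..n}" and a: "a \<in> {1..n}" "a \<notin> C" and b: "b \<in> {1..n}" "b \<notin> C"
  shows "(\<integral>\<^sup>+\<omega>. ennreal (max 0 ((\<Sum>i\<in>C. (B i \<omega> - \<mu> i)) + (B a \<omega> - \<mu> a))) \<partial>M)
       \<le> (\<integral>\<^sup>+\<omega>. ennreal (max 0 ((\<Sum>i\<in>C. (B i \<omega> - \<mu> i)) + (B b \<omega> - \<mu> b))) \<partial>M)"
proof -
  have sm: "(\<lambda>g. \<Sum>i\<in>C. (g i - \<mu> i)) \<in> borel_measurable (PiM C (\<lambda>_. borel))"
    by measurable
  have hm: "(\<lambda>x. x - \<mu> k) \<in> borel_measurable borel" for k by measurable
  have indA: "indep_var borel (\<lambda>\<omega>. \<Sum>i\<in>C. (B i \<omega> - \<mu> i)) borel (\<lambda>\<omega>. B a \<omega> - \<mu> a)"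
    using indep_block[OF ind C a sm hm] by simp
  have indB: "indep_var borel (\<lambda>\<omega>. \<Sum>i\<in>C. (B i \<omega> - \<mu> i)) borel (\<lambda>\<omega>. B b \<omega> - \<mu> b)"
    using indep_block[OF ind C b sm hm] by simp
  have "(\<integral>\<^sup>+\<omega>. ennreal (max 0 ((\<Sum>i\<in>C. (B i \<omega> - \<mu> i)) + (B a \<omega> - \<mu> a))) \<partial>M)
     = (\<integral>\<^sup>+\<omega>. (\<integral>\<^sup>+\<omega>'. ennreal (max 0 ((\<Sum>i\<in>C. (B i \<omega> - \<mu> i)) + (B a \<omega>' - \<mu> a))) \<partial>M) \<partial>M)"
    by (rule indep_var_nn_integral2[OF indA, where g="\<lambda>s x. ennreal (max 0 (s + x))"]; measurable)
  also have "\<dots> \<le> (\<integral>\<^sup>+\<omega>. (\<integral>\<^sup>+\<omega>'. ennreal (max 0 ((\<Sum>i\<in>C. (B i \<omega> - \<mu> i)) + (B b \<omega>' - \<mu> b))) \<partial>M) \<partial>M)"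
    by (rule nn_integral_mono) (rule mono)
  also have "\<dots> = (\<integral>\<^sup>+\<omega>. ennreal (max 0 ((\<Sum>i\<in>C. (B i \<omega> - \<mu> i)) + (B b \<omega> - \<mu> b))) \<partial>M)"
    by (rule indep_var_nn_integral2[OF indB, where g="\<lambda>s x. ennreal (max 0 (s + x))", symmetric]; measurable)
  finally show ?thesis .
qed

lemma (in prob_space) sum_set_le:
  fixes B :: "nat \<Rightarrow> 'a \<Rightarrow> real" and \<mu> :: "nat \<Rightarrow> real"
  assumes ind: "indep_vars (\<lambda>_. borel) B {1..n}"
    and mono: "\<And>t a b. a \<in> {1..n} \<Longrightarrow> b \<in> {1..n} \<Longrightarrow> a \<le> b \<Longrightarrow>
        (\<integral>\<^sup>+\<omega>. ennreal (max 0 (t + (B a \<omega> - \<mu> a))) \<partial>M) \<le> (\<integral>\<^sup>+\<omega>. ennreal (max 0 (t + (B b \<omega> - \<mu> b))) \<partial>M)"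
  shows "A \<subseteq> {1..n} \<Longrightarrow> card A = k \<Longrightarrow>
     (\<integral>\<^sup>+\<omega>. ennreal (max 0 (\<Sum>i\<in>{1..k}. (B i \<omega> - \<mu> i))) \<partial>M)
       \<le> (\<integral>\<^sup>+\<omega>. ennreal (max 0 (\<Sum>i\<in>A. (B i \<omega> - \<mu> i))) \<partial>M)"
proof (induction "\<Sum>A" arbitrary: A rule: less_induct)
  case less
  note A = less.prems
  have finA: "finite A" using A(1) finite_subset by blast
  show ?case
  proof (cases "A = {1..k}")
    case True
    then show ?thesis by simp
  next
    case False
    have kn: "k \<le> n" using card_mono[OF _ A(1)] A(2) by simp
    have "\<exists>b\<in>A. k < b"
    proof (rule ccontr)
      assume "\<not> ?thesis"
      then have "A \<subseteq> {1..k}" using A(1) by force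
      then have "A = {1..k}" using A(2) by (intro card_subset_eq) auto
      then show False using False by simp
    qed
    then obtain b where b: "b \<in> A" "k < b" by blast
    have "\<exists>a\<in>{1..k}. a \<notin> A"
    proof (rule ccontr)
      assume "\<not> ?thesis"
      then have "{1..k} \<subseteq> A" by force
      then have "{1..k} = A" using A(2) finA by (intro card_subset_eq) auto
      then show False using False by simp
    qed
    then obtain a where a: "a \<in> {1..k}" "a \<notin> A" by blast
    define C where "C = A - {b}"
    have C: "C \<subseteq> {1..n}" "a \<notin> C" "b \<notin> C" "finite C" using A(1) a b finA by (auto simp: C_def)
    have an: "a \<in> {1..n}" "b \<in> {1..n}" using a kn b A(1) by auto
    have cardA': "card (insert a C) = k"
    proof -
      have "0 < card A" using b finA card_gt_0_iff by blast
      then show ?thesis using C b A(2) finA by (simp add: C_def card_Diff_singleton)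
    qed
    have sumA: "\<Sum>A = \<Sum>C + b" using b finA by (simp add: C_def sum.remove)
    have sumA': "\<Sum>(insert a C) = \<Sum>C + a" using C by simp
    have lt: "\<Sum>(insert a C) < \<Sum>A" using sumA sumA' a b by simp
    have IH: "(\<integral>\<^sup>+\<omega>. ennreal (max 0 (\<Sum>i\<in>{1..k}. (B i \<omega> - \<mu> i))) \<partial>M)
       \<le> (\<integral>\<^sup>+\<omega>. ennreal (max 0 (\<Sum>i\<in>insert a C. (B i \<omega> - \<mu> i))) \<partial>M)"
      using less.hyps[OF lt] C an cardA' by auto
    also have "\<dots> = (\<integral>\<^sup>+\<omega>. ennreal (max 0 ((\<Sum>i\<in>C. (B i \<omega> - \<mu> i)) + (B a \<omega> - \<mu> a))) \<partial>M)"
      using C by (simp add: add.commute)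
    also have "\<dots> \<le> (\<integral>\<^sup>+\<omega>. ennreal (max 0 ((\<Sum>i\<in>C. (B i \<omega> - \<mu> i)) + (B b \<omega> - \<mu> b))) \<partial>M)"
      by (rule exchange[OF ind _ C(1) an(1) C(2) an(2) C(3)]) (rule mono, use an a b in auto)
    also have "\<dots> = (\<integral>\<^sup>+\<omega>. ennreal (max 0 (\<Sum>i\<in>A. (B i \<omega> - \<mu> i))) \<partial>M)"
      using b finA by (simp add: C_def sum.remove add.commute)
    finally show ?thesis .
  qed
qed

lemma wait_bound: "wait \<tau> x B j s \<le> (\<Sum>i\<in>{1..<j}. \<bar>B (\<tau> i) s - x (\<tau> i)\<bar>)"
proof (induction j)
  case 0
  then show ?case by simp
next
  case (Suc j)
  show ?case
  proof (cases "j = 0")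
    case True
    then show ?thesis by simp
  next
    case False
    then have "{1..<Suc j} = insert j {1..<j}" by auto
    then show ?thesis using Suc False by auto
  qed
qed

lemma wait_lower: "(\<Sum>i=1..k. (B (\<tau> i) s - x (\<tau> i))) \<le> wait \<tau> x B (Suc k) s"
proof (induction k)
  case 0
  then show ?case by simp
next
  case (Suc k)
  then show ?case by auto
qed

lemma (in prob_space) wait_integrable:
  assumes "\<And>i. 1 \<le> i \<Longrightarrow> i < j \<Longrightarrow> integrable M (B (\<tau> i))"
  shows "integrable M (\<lambda>s. wait \<tau> x B j s)"
proof (rule Bochner_Integration.integrable_bound)
  show "integrable M (\<lambda>s. \<Sum>i\<in>{1..<j}. \<bar>B (\<tau> i) s - x (\<tau> i)\<bar>)"
    apply (rule Bochner_Integration.integrable_sum)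
    apply (rule integrable_abs)
    apply (rule Bochner_Integration.integrable_diff)
    using assms by auto
  show "(\<lambda>s. wait \<tau> x B j s) \<in> borel_measurable M"
    using assms by (intro wait_meas) auto
  show "AE s in M. norm (wait \<tau> x B j s) \<le> norm (\<Sum>i\<in>{1..<j}. \<bar>B (\<tau> i) s - x (\<tau> i)\<bar>)"
    using wait_bound[of \<tau> x B j] wait_nonneg[of \<tau> x B j] by (auto intro!: AE_I2 order_trans[OF _ abs_ge_self])
qed

lemma nn_to_real:
  fixes f g :: "'a \<Rightarrow> real"
  assumes "integrable M f" "integrable M g" "\<And>x. 0 \<le> f x" "\<And>x. 0 \<le> g x"
    and "(\<integral>\<^sup>+x. ennreal (f x) \<partial>M) \<le> (\<integral>\<^sup>+x. ennreal (g x) \<partial>M)"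
  shows "(\<integral>x. f x \<partial>M) \<le> (\<integral>x. g x \<partial>M)"
  using assms by (simp add: nn_integral_eq_integral)

lemma idle_eq: "1 \<le> m \<Longrightarrow> idle \<tau> x B (Suc m) s = wait \<tau> x B (Suc m) s - (wait \<tau> x B m s + B (\<tau> m) s - x (\<tau> m))"
  by (auto simp: idle_def max_def)

lemma (in prob_space) idle_sum:
  assumes iB: "\<And>i. 1 \<le> i \<Longrightarrow> i < m \<Longrightarrow> integrable M (B (\<tau> i))"
    and mB: "\<And>i. 1 \<le> i \<Longrightarrow> i < m \<Longrightarrow> (\<integral>s. B (\<tau> i) s \<partial>M) = x (\<tau> i)"
  shows "(\<Sum>i=1..m. \<integral>s. idle \<tau> x B i s \<partial>M) = (\<integral>s. wait \<tau> x B m s \<partial>M)"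
  using assms
proof (induction m)
  case 0
  then show ?case by simp
next
  case (Suc m)
  have IH: "(\<Sum>i=1..m. \<integral>s. idle \<tau> x B i s \<partial>M) = (\<integral>s. wait \<tau> x B m s \<partial>M)"
    using Suc by auto
  show ?case
  proof (cases "m = 0")
    case True
    then show ?thesis by (simp add: idle_def)
  next
    case False
    have iW1: "integrable M (\<lambda>s. wait \<tau> x B (Suc m) s)" by (rule wait_integrable) (use Suc.prems in auto)
    have iW0: "integrable M (\<lambda>s. wait \<tau> x B m s)" by (rule wait_integrable) (use Suc.prems in auto)
    have iBm: "integrable M (B (\<tau> m))" using Suc.prems False by auto
    have mBm: "(\<integral>s. B (\<tau> m) s \<partial>M) = x (\<tau> m)" using Suc.prems False by auto
    have "(\<integral>s. idle \<tau> x B (Suc m) s \<partial>M) = (\<integral>s. wait \<tau> x B (Suc m) s - (wait \<tau> x B m s + B (\<tau> m) s - x (\<tau> m)) \<partial>M)"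
      using False by (simp add: idle_eq)
    also have "\<dots> = (\<integral>s. wait \<tau> x B (Suc m) s \<partial>M) - ((\<integral>s. wait \<tau> x B m s \<partial>M) + (\<integral>s. B (\<tau> m) s \<partial>M) - x (\<tau> m))"
      using iW1 iW0 iBm by (simp add: prob_space)
    finally have "(\<integral>s. idle \<tau> x B (Suc m) s \<partial>M) = (\<integral>s. wait \<tau> x B (Suc m) s \<partial>M) - (\<integral>s. wait \<tau> x B m s \<partial>M)"
      using mBm by simp
    then show ?thesis using IH by simp
  qed
qed

theorem theorem3p1:
  fixes M :: "'a measure" and B :: "nat \<Rightarrow> 'a \<Rightarrow> real" and n :: nat and w :: real
  assumes "prob_space M"
    and "n \<ge> 1"
    and meas: "\<And>i. i \<in> {1..n} \<Longrightarrow> B i \<in> borel_measurable M"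
    and indep: "prob_space.indep_vars M (\<lambda>_. borel) B {1..n}"
    and var_fin: "\<And>i. i \<in> {1..n} \<Longrightarrow> integrable M (\<lambda>s. (B i s)\<^sup>2)"
    and w: "0 < w" "w < 1"
    and dil: "\<And>i. 1 \<le> i \<Longrightarrow> i < n \<Longrightarrow> dil_le M (B i) (B (Suc i))"
    and symm: "\<And>i. i \<in> {1..n} \<Longrightarrow>
       distr M borel (\<lambda>s. B i s - (\<integral>t. B i t \<partial>M)) = distr M borel (\<lambda>s. (\<integral>t. B i t \<partial>M) - B i s)"
  shows "\<forall>\<tau>. \<tau> permutes {1..n} \<longrightarrow>
           cost M B n id (mean_sched M B) w \<le> 2 * cost M B n \<tau> (mean_sched M B) w"
proof (intro allI impI)
  fix \<tau> assume \<tau>: "\<tau> permutes {1..n}"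
  interpret prob_space M by fact
  define \<mu> where "\<mu> = mean_sched M B"
  have \<mu>i: "\<mu> i = (\<integral>s. B i s \<partial>M)" for i by (simp add: \<mu>_def mean_sched_def)
  have iB: "integrable M (B i)" if "i \<in> {1..n}" for i
    using square_integrable_imp_integrable[OF meas[OF that] var_fin[OF that]] .
  have symm': "distr M borel (\<lambda>s. B i s - \<mu> i) = distr M borel (\<lambda>s. \<mu> i - B i s)" if "i \<in> {1..n}" for i
    using symm[OF that] by (simp add: \<mu>i)
  have monostep: "(\<integral>\<^sup>+\<omega>. ennreal (max 0 (t + (B i \<omega> - \<mu> i))) \<partial>M)
      \<le> (\<integral>\<^sup>+\<omega>. ennreal (max 0 (t + (B (Suc i) \<omega> - \<mu> (Suc i)))) \<partial>M)" if "1 \<le> i" "i < n" for t i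
    unfolding \<mu>i by (rule dil_step[OF dil[OF that] iB iB]) (use that in auto)
  have mono: "(\<integral>\<^sup>+\<omega>. ennreal (max 0 (t + (B a \<omega> - \<mu> a))) \<partial>M)
      \<le> (\<integral>\<^sup>+\<omega>. ennreal (max 0 (t + (B b \<omega> - \<mu> b))) \<partial>M)"
    if "a \<in> {1..n}" "b \<in> {1..n}" "a \<le> b" for t a b
    using that(3,2)
  proof (induction b rule: dec_induct)
    case base
    then show ?case by simp
  next
    case (step m)
    then show ?case using monostep[of m t] that(1) by (auto intro: order_trans)
  qed
  have \<tau>in: "\<tau> i \<in> {1..n}" if "i \<in> {1..n}" for i using \<tau> that by (simp only: permutes_in_image)
  have iBt: "integrable M (B (\<tau> i))" if "1 \<le> i" "i < n" for i using iB \<tau>in that by auto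
  have iBid: "integrable M (B (id i))" if "1 \<le> i" "i < n" for i using iB that by auto
  have key: "(\<integral>s. wait id \<mu> B (Suc k) s \<partial>M) \<le> 2 * (\<integral>s. wait \<tau> \<mu> B (Suc k) s \<partial>M)" if k: "k < n" for k
  proof -
    define S where "S = (\<lambda>\<omega>. \<Sum>i=1..k. (B i \<omega> - \<mu> i))"
    define St where "St = (\<lambda>\<omega>. \<Sum>i=1..k. (B (\<tau> i) \<omega> - \<mu> (\<tau> i)))"
    have iS: "integrable M S" unfolding S_def
      apply (rule Bochner_Integration.integrable_sum)
      apply (rule Bochner_Integration.integrable_diff)
      using iB k by auto
    have iSt: "integrable M St" unfolding St_def
      apply (rule Bochner_Integration.integrable_sum)
      apply (rule Bochner_Integration.integrable_diff)
      using iBt k by auto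
    have iWid: "integrable M (\<lambda>s. wait id \<mu> B (Suc k) s)" by (rule wait_integrable) (use iBid k in auto)
    have iWt: "integrable M (\<lambda>s. wait \<tau> \<mu> B (Suc k) s)" by (rule wait_integrable) (use iBt k in auto)
    have L1: "(\<integral>\<^sup>+\<omega>. ennreal (max 0 (wait id \<mu> B (Suc k) \<omega> - 0)) \<partial>M)
      \<le> (\<integral>\<^sup>+\<omega>. ennreal (max 0 (\<bar>S \<omega>\<bar> - 0)) \<partial>M)"
      unfolding S_def by (rule lindley_id[OF indep symm' k])
    have R1: "(\<integral>s. wait id \<mu> B (Suc k) s \<partial>M) \<le> (\<integral>s. \<bar>S s\<bar> \<partial>M)"
      by (rule nn_to_real) (use iWid iS L1 wait_nonneg in auto)
    have ES: "(\<integral>s. S s \<partial>M) = 0"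
    proof -
      have "(\<integral>s. S s \<partial>M) = (\<Sum>i=1..k. \<integral>s. (B i s - \<mu> i) \<partial>M)"
        unfolding S_def
        apply (rule Bochner_Integration.integral_sum)
        apply (rule Bochner_Integration.integrable_diff)
        using iB k by auto
      also have "\<dots> = 0"
        using iB k by (intro sum.neutral) (auto simp: \<mu>i prob_space)
      finally show ?thesis .
    qed
    have R2: "(\<integral>s. \<bar>S s\<bar> \<partial>M) = 2 * (\<integral>s. max 0 (S s) \<partial>M)"
    proof -
      have "(\<integral>s. \<bar>S s\<bar> \<partial>M) = (\<integral>s. 2 * max 0 (S s) - S s \<partial>M)"
        by (intro Bochner_Integration.integral_cong) (auto simp: max_def)
      also have "\<dots> = 2 * (\<integral>s. max 0 (S s) \<partial>M) - (\<integral>s. S s \<partial>M)"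
        using iS by simp
      finally show ?thesis using ES by simp
    qed
    have A: "\<tau> ` {1..k} \<subseteq> {1..n}" using \<tau>in k by auto
    have cardA: "card (\<tau> ` {1..k}) = k"
      using inj_on_subset[OF permutes_inj[OF \<tau>] subset_UNIV] by (simp add: card_image)
    have reidx: "(\<Sum>i\<in>\<tau> ` {1..k}. (B i \<omega> - \<mu> i)) = St \<omega>" for \<omega>
      unfolding St_def using inj_on_subset[OF permutes_inj[OF \<tau>] subset_UNIV]
      by (subst sum.reindex) auto
    have L3: "(\<integral>\<^sup>+\<omega>. ennreal (max 0 (S \<omega>)) \<partial>M) \<le> (\<integral>\<^sup>+\<omega>. ennreal (max 0 (St \<omega>)) \<partial>M)"
      using sum_set_le[OF indep mono A cardA] unfolding S_def reidx by simp
    have R3: "(\<integral>s. max 0 (S s) \<partial>M) \<le> (\<integral>s. max 0 (St s) \<partial>M)"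
      by (rule nn_to_real) (use iS iSt L3 in auto)
    have R4: "(\<integral>s. max 0 (St s) \<partial>M) \<le> (\<integral>s. wait \<tau> \<mu> B (Suc k) s \<partial>M)"
      apply (rule integral_mono)
      using iSt apply simp
      using iWt apply simp
      subgoal for x unfolding St_def by (rule max.boundedI[OF wait_nonneg wait_lower])
      done
    show ?thesis using R1 R2 R3 R4 by linarith
  qed
  have cost_eq: "cost M B n \<sigma> \<mu> w = w * (\<integral>s. wait \<sigma> \<mu> B n s \<partial>M) + (1 - w) * (\<Sum>i=1..n. \<integral>s. wait \<sigma> \<mu> B i s \<partial>M)"
    if "\<And>i. i \<in> {1..n} \<Longrightarrow> \<sigma> i \<in> {1..n}" for \<sigma>
    unfolding cost_def
    by (subst idle_sum) (use that iB in \<open>auto simp: \<mu>i\<close>)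
  have all: "(\<integral>s. wait id \<mu> B i s \<partial>M) \<le> 2 * (\<integral>s. wait \<tau> \<mu> B i s \<partial>M)" if "i \<in> {1..n}" for i
    using key[of "i - 1"] that by (cases i) auto
  have ce_id: "cost M B n id \<mu> w = w * (\<integral>s. wait id \<mu> B n s \<partial>M) + (1 - w) * (\<Sum>i=1..n. \<integral>s. wait id \<mu> B i s \<partial>M)"
    by (rule cost_eq) simp
  have ce_t: "cost M B n \<tau> \<mu> w = w * (\<integral>s. wait \<tau> \<mu> B n s \<partial>M) + (1 - w) * (\<Sum>i=1..n. \<integral>s. wait \<tau> \<mu> B i s \<partial>M)"
    by (rule cost_eq) (rule \<tau>in)
  have s1: "(\<Sum>i=1..n. \<integral>s. wait id \<mu> B i s \<partial>M) \<le> 2 * (\<Sum>i=1..n. \<integral>s. wait \<tau> \<mu> B i s \<partial>M)"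
    unfolding sum_distrib_left by (rule sum_mono) (rule all)
  have s0: "(\<integral>s. wait id \<mu> B n s \<partial>M) \<le> 2 * (\<integral>s. wait \<tau> \<mu> B n s \<partial>M)"
    using all[of n] \<open>n \<ge> 1\<close> by simp
  have a: "w * (\<integral>s. wait id \<mu> B n s \<partial>M) \<le> w * (2 * (\<integral>s. wait \<tau> \<mu> B n s \<partial>M))"
    using mult_left_mono[OF s0, of w] w by linarith
  have b: "(1 - w) * (\<Sum>i=1..n. \<integral>s. wait id \<mu> B i s \<partial>M) \<le> (1 - w) * (2 * (\<Sum>i=1..n. \<integral>s. wait \<tau> \<mu> B i s \<partial>M))"
    using mult_left_mono[OF s1, of "1 - w"] w by linarith
  have "cost M B n id \<mu> w \<le> 2 * cost M B n \<tau> \<mu> w"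
    unfolding ce_id ce_t using a b by (simp only: distrib_left mult.left_commute[of 2])
  then show "cost M B n id (mean_sched M B) w \<le> 2 * cost M B n \<tau> (mean_sched M B) w"
    by (simp add: \<mu>_def)
qed

end
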